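(* The following congruences hold coefficientwise modulo $128$: $$\sum_{n\ge0}\overline{bt}(4n)q^n\equiv 32q\frac{f_2^{47}}{f_1^{50}f_4f_8^2}+56q\frac{f_2^{61}f_8^2}{f_1^{54}f_4^{15}}+\frac{f_2^{71}}{f_1^{58}f_4^{17}f_8^2},$$ $$\sum_{n\ge0}\overline{bt}(8n)q^n\equiv 32q\frac{f_2^{169}f_8^2}{f_1^{126}f_4^{51}}+16q\frac{f_2^{155}}{f_1^{122}f_4^{37}f_8^2}+\frac{f_2^{179}}{f_1^{130}f_4^{53}f_8^2},$$ $$\sum_{n\ge0}\overline{bt}(16n)q^n\equiv 96q\frac{f_2^{385}f_8^2}{f_1^{270}f_4^{123}}+\frac{f_2^{395}}{f_1^{274}f_4^{125}f_8^2},$$ $$\sum_{n\ge0}\overline{bt}(32n)q^n\equiv 96q\frac{f_2^{803}}{f_1^{554}f_4^{253}f_8^2}+96q\frac{f_2^{817}f_8^2}{f_1^{558}f_4^{267}}+\frac{f_2^{827}}{f_1^{562}f_4^{269}f_8^2}.$$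
   Context: For a positive integer $k$ let $f_k:=\prod_{m=1}^\infty(1-q^{mk})$, viewed as formal power series in $q$ with integer coefficients (quotients of such products with constant term $1$ are again integer power series). The function $\overline{bt}(n)$ is defined by $\sum_{n\ge0}\overline{bt}(n)q^n=\frac{f_4^3}{f_1^6f_2^3}$. A congruence $A\equiv B\pmod m$ between power series means all corresponding coefficients are congruent modulo $m$. *)

theory Defs
  imports "HOL-Computational_Algebra.Formal_Power_Series"
begin

text \<open>Power series are taken over the rationals so that quotients of the
products f_k (which have constant term 1) can be formed with the library's
fps inverse; all series involved have integer coefficients.\<close>

text \<open>f_k = prod_{m>=1} (1 - q^(mk)).  The n-th coefficient of the infinite
product equals the n-th coefficient of the finite product over m = 1..n
(for k >= 1 the factors with m > n are 1 + O(q^(n+1))).\<close>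
definition f :: "nat \<Rightarrow> rat fps" where
  "f k = Abs_fps (\<lambda>n. fps_nth (\<Prod>m\<in>{1..n}. 1 - fps_X ^ (m * k)) n)"

definition bt_gf :: "rat fps" where
  "bt_gf = f 4 ^ 3 / (f 1 ^ 6 * f 2 ^ 3)"

definition bt :: "nat \<Rightarrow> rat" where
  "bt n = fps_nth bt_gf n"

definition fps_cong :: "rat fps \<Rightarrow> rat fps \<Rightarrow> int \<Rightarrow> bool" where
  "fps_cong A B m \<longleftrightarrow> (\<forall>n. \<exists>c::int. fps_nth A n - fps_nth B n = of_int (m * c))"

end

theory Submission
  imports Defs
begin
unbundle fps_syntax

definition teq :: "nat \<Rightarrow> rat fps \<Rightarrow> rat fps \<Rightarrow> bool" where
  "teq M A B \<longleftrightarrow> (\<forall>i<M. A $ i = B $ i)"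

lemma teq_refl[simp]: "teq M A A" by (simp add: teq_def)
lemma teq_sym: "teq M A B \<Longrightarrow> teq M B A" by (simp add: teq_def)
lemma teq_trans: "teq M A B \<Longrightarrow> teq M B C \<Longrightarrow> teq M A C" by (simp add: teq_def)
lemma teq_mono: "teq M A B \<Longrightarrow> M' \<le> M \<Longrightarrow> teq M' A B" by (simp add: teq_def)
lemma teq_add: "teq M A B \<Longrightarrow> teq M C E \<Longrightarrow> teq M (A + C) (B + E)" by (simp add: teq_def)
lemma teq_diff: "teq M A B \<Longrightarrow> teq M C E \<Longrightarrow> teq M (A - C) (B - E)" by (simp add: teq_def)
lemma teq_mult: assumes "teq M A B" "teq M C E" shows "teq M (A * C) (B * E)"
  unfolding teq_def
proof (intro allI impI)
  fix i assume i: "i < M"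
  show "(A * C) $ i = (B * E) $ i" unfolding fps_mult_nth
    using assms i unfolding teq_def by (intro sum.cong) auto
qed
lemma teq_power: "teq M A B \<Longrightarrow> teq M (A ^ n) (B ^ n)"
  by (induction n) (auto intro: teq_mult)
lemma teq_prod: "(\<And>x. x \<in> S \<Longrightarrow> teq M (F x) (G x)) \<Longrightarrow> teq M (prod F S) (prod G S)"
  by (induction S rule: infinite_finite_induct) (auto intro: teq_mult)
lemma teq_sum: "(\<And>x. x \<in> S \<Longrightarrow> teq M (F x) (G x)) \<Longrightarrow> teq M (sum F S) (sum G S)"
  by (induction S rule: infinite_finite_induct) (auto intro: teq_add)
lemma teq_inverse: assumes "teq M A B" "A $ 0 \<noteq> 0" shows "teq M (inverse A) (inverse B)"
proof (cases "M = 0")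
  case True then show ?thesis by (simp add: teq_def)
next
  case False
  then have b0: "B $ 0 \<noteq> 0" using assms unfolding teq_def by auto
  have "inverse A = inverse A * B * inverse B" using b0 by (simp add: inverse_mult_eq_1' mult.assoc)
  moreover have "teq M (inverse A * B * inverse B) (inverse A * A * inverse B)"
    by (intro teq_mult teq_refl teq_sym[OF assms(1)])
  moreover have "inverse A * A * inverse B = inverse B" using assms(2) by (simp add: inverse_mult_eq_1)
  ultimately show ?thesis by metis
qed
lemma teq_eq: "(\<And>M. teq M A B) \<Longrightarrow> A = B"
  by (metis fps_ext lessI teq_def)
lemma teq_X_power: "M \<le> e \<Longrightarrow> teq M (fps_X ^ e * A) 0"
  by (simp add: teq_def fps_X_power_mult_nth)

definition P :: "nat \<Rightarrow> nat \<Rightarrow> rat fps" where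
  "P k N = (\<Prod>m\<in>{1..N}. 1 - fps_X ^ (m * k))"

lemma teq_one_minus: "M \<le> e \<Longrightarrow> teq M (1 - fps_X ^ e) 1"
  using teq_diff[OF teq_refl teq_X_power[of M e 1]] by simp

lemma P_split: "n \<le> N \<Longrightarrow> P k N = P k n * (\<Prod>m\<in>{n<..N}. 1 - fps_X ^ (m * k))"
proof -
  assume "n \<le> N"
  then have "{1..N} = {1..n} \<union> {n<..N}" by auto
  then show ?thesis unfolding P_def by (simp add: prod.union_disjoint ivl_disj_int)
qed

lemma teq_P_P: assumes "k \<ge> 1" "n \<le> N" shows "teq (n+1) (P k N) (P k n)"
proof -
  have "teq (n+1) (\<Prod>m\<in>{n<..N}. 1 - fps_X ^ (m * k)) (\<Prod>m\<in>{n<..N}. 1)"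
  proof (intro teq_prod teq_one_minus)
    fix m assume "m \<in> {n<..N}"
    then have "n + 1 \<le> m" by simp
    moreover have "m \<le> m * k" using assms(1) by simp
    ultimately show "n + 1 \<le> m * k" by linarith
  qed
  then have "teq (n+1) (P k n * (\<Prod>m\<in>{n<..N}. 1 - fps_X ^ (m * k))) (P k n * 1)"
    by (intro teq_mult teq_refl) simp
  then show ?thesis using P_split[OF assms(2)] by simp
qed

lemma f_nth: "f k $ n = P k n $ n" by (simp add: f_def P_def)

lemma teq_f_P: assumes "k \<ge> 1" shows "teq (N+1) (f k) (P k N)"
  unfolding teq_def
proof (intro allI impI)
  fix i assume "i < N + 1"
  then have "teq (i+1) (P k N) (P k i)" using teq_P_P[OF assms] by simp
  then show "f k $ i = P k N $ i" by (simp add: f_nth teq_def)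
qed

lemma P_0[simp]: "k \<ge> 1 \<Longrightarrow> P k N $ 0 = 1"
  unfolding P_def by (induction N) (auto simp: atLeastAtMostSuc_conv)

lemma f_0[simp]: "k \<ge> 1 \<Longrightarrow> f k $ 0 = 1" by (simp add: f_nth)


definition D :: "rat fps \<Rightarrow> rat fps" where "D A = A oo fps_X ^ 2"
definition E :: "rat fps \<Rightarrow> rat fps" where "E A = Abs_fps (\<lambda>n. A $ (2 * n))"
definition Od :: "rat fps \<Rightarrow> rat fps" where "Od A = Abs_fps (\<lambda>n. A $ (2 * n + 1))"

lemma D_nth: "D A $ n = (if even n then A $ (n div 2) else 0)"
proof -
  have "D A $ n = (\<Sum>i=0..n. A $ i * (if n = 2 * i then 1 else 0))"
    unfolding D_def fps_compose_nth by (simp add: power_mult[symmetric] mult.commute)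
  also have "\<dots> = (\<Sum>i=0..n. if i = n div 2 then (if even n then A $ i else 0) else 0)"
    by (intro sum.cong) auto
  finally show ?thesis by (simp add: sum.delta)
qed

lemma X2_0: "(fps_X ^ 2 :: rat fps) $ 0 = 0" by simp

lemma D_add: "D (A + B) = D A + D B" by (simp add: D_def fps_compose_add_distrib)
lemma D_diff: "D (A - B) = D A - D B" by (simp add: D_def fps_compose_sub_distrib)
lemma D_mult: "D (A * B) = D A * D B" by (simp add: D_def fps_compose_mult_distrib)
lemma D_power: "D (A ^ n) = D A ^ n" by (simp add: D_def fps_compose_power)
lemma D_prod: "D (prod F S) = (\<Prod>x\<in>S. D (F x))" by (simp add: D_def fps_compose_prod_distrib)
lemma D_1[simp]: "D 1 = 1" by (simp add: D_def)
lemma D_X: "D fps_X = fps_X ^ 2" by (simp add: D_def)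
lemma D_Xp: "D (fps_X ^ n) = fps_X ^ (2 * n)" by (simp add: D_power D_X power_mult)
lemma D_of_int: "D (of_int c) = of_int c" by (simp add: D_def fps_of_int[symmetric])
lemma D_inverse: "A $ 0 \<noteq> 0 \<Longrightarrow> D (inverse A) = inverse (D A)"
  by (simp add: D_def fps_inverse_compose)
lemma D_0: "D A $ 0 = A $ 0" by (simp add: D_nth)

lemma E_add: "E (A + B) = E A + E B" by (simp add: E_def fps_eq_iff)
lemma E_diff: "E (A - B) = E A - E B" by (simp add: E_def fps_eq_iff)
lemma E_of_int_mult: "E (of_int c * A) = of_int c * E A"
  by (simp add: E_def fps_eq_iff fps_of_int[symmetric])
lemma E_D: "E (D A) = A" by (simp add: E_def D_nth fps_eq_iff)
lemma E_XD: "E (fps_X * D A) = 0"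
  by (auto simp: E_def D_nth fps_eq_iff)
lemma Od_add: "Od (A + B) = Od A + Od B" by (simp add: Od_def fps_eq_iff)
lemma Od_D: "Od (D A) = 0" by (simp add: Od_def D_nth fps_eq_iff)
lemma Od_XD: "Od (fps_X * D A) = A" by (simp add: Od_def D_nth fps_eq_iff)

lemma decomp: "A = D (E A) + fps_X * D (Od A)"
proof (rule fps_ext)
  fix n show "A $ n = (D (E A) + fps_X * D (Od A)) $ n"
  proof (cases "even n")
    case True then show ?thesis by (auto simp: D_nth E_def Od_def)
  next
    case False
    then obtain m where "n = 2 * m + 1" using oddE by blast
    then show ?thesis by (auto simp: D_nth E_def Od_def)
  qed
qed

lemma E_D_mult: "E (D B * A) = B * E A"
proof -
  have "D B * A = D (B * E A) + fps_X * D (B * Od A)"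
    by (subst decomp[of A]) (simp add: D_mult algebra_simps)
  then show ?thesis by (simp add: E_add E_D E_XD)
qed

lemma Od_D_mult: "Od (D B * A) = B * Od A"
proof -
  have "D B * A = D (B * E A) + fps_X * D (B * Od A)"
    by (subst decomp[of A]) (simp add: D_mult algebra_simps)
  then show ?thesis by (simp add: Od_add Od_D Od_XD)
qed

lemma E_even_term: "E (fps_X ^ (2 * s) * D N) = fps_X ^ s * N"
  using E_D[of "fps_X ^ s * N"] by (simp add: D_mult D_Xp)
lemma E_odd_term: "E (fps_X ^ (2 * s + 1) * D N) = 0"
  using E_XD[of "fps_X ^ s * N"] by (simp add: D_mult D_Xp mult.assoc)

lemma D_P: "D (P k N) = P (2 * k) N"
  unfolding P_def D_prod by (simp add: D_diff D_Xp mult.assoc mult.left_commute)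

lemma teq_D: "teq M A B \<Longrightarrow> teq (2 * M) (D A) (D B)"
  by (auto simp: teq_def D_nth)

lemma D_f: assumes "k \<ge> 1" shows "D (f k) = f (2 * k)"
proof (rule teq_eq)
  fix M
  have "teq (2 * (M + 1)) (D (f k)) (D (P k M))" by (intro teq_D teq_f_P assms)
  then have 1: "teq (M + 1) (D (f k)) (P (2 * k) M)" by (auto simp: D_P intro: teq_mono)
  have 2: "teq (M + 1) (f (2 * k)) (P (2 * k) M)" using assms by (intro teq_f_P) simp
  show "teq M (D (f k)) (f (2 * k))"
    by (rule teq_mono[OF teq_trans[OF 1 teq_sym[OF 2]]]) simp
qed

definition intfps :: "rat fps \<Rightarrow> bool" where "intfps A \<longleftrightarrow> (\<forall>n. A $ n \<in> \<int>)"

lemma intfps_add: "intfps A \<Longrightarrow> intfps B \<Longrightarrow> intfps (A + B)" by (simp add: intfps_def)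
lemma intfps_diff: "intfps A \<Longrightarrow> intfps B \<Longrightarrow> intfps (A - B)" by (simp add: intfps_def)
lemma intfps_uminus: "intfps A \<Longrightarrow> intfps (- A)" by (simp add: intfps_def)
lemma intfps_mult: "intfps A \<Longrightarrow> intfps B \<Longrightarrow> intfps (A * B)"
  by (auto simp: intfps_def fps_mult_nth intro!: Ints_sum)
lemma intfps_1[simp]: "intfps 1" by (simp add: intfps_def fps_one_nth)
lemma intfps_0[simp]: "intfps 0" by (simp add: intfps_def)
lemma intfps_X[simp]: "intfps fps_X" by (simp add: intfps_def fps_X_def)
lemma intfps_of_int[simp]: "intfps (of_int c)" by (simp add: intfps_def)
lemma intfps_power: "intfps A \<Longrightarrow> intfps (A ^ n)" by (induction n) (auto intro: intfps_mult)
lemma intfps_Xp[simp]: "intfps (fps_X ^ n)" by (simp add: intfps_power)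
lemma intfps_prod: "(\<And>x. x \<in> S \<Longrightarrow> intfps (F x)) \<Longrightarrow> intfps (prod F S)"
  by (induction S rule: infinite_finite_induct) (auto intro: intfps_mult)
lemma intfps_sum: "(\<And>x. x \<in> S \<Longrightarrow> intfps (F x)) \<Longrightarrow> intfps (sum F S)"
  by (induction S rule: infinite_finite_induct) (auto intro: intfps_add)
lemma intfps_D: "intfps A \<Longrightarrow> intfps (D A)" by (simp add: intfps_def D_nth)
lemma intfps_E: "intfps A \<Longrightarrow> intfps (E A)" by (simp add: intfps_def E_def)

lemma intfps_inverse: assumes A: "intfps A" "A $ 0 = 1" shows "intfps (inverse A)"
proof -
  let ?B = "inverse A"
  have AB: "A * ?B = 1" using A by (simp add: inverse_mult_eq_1')
  have "?B $ n \<in> \<int>" for n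
  proof (induction n rule: less_induct)
    case (less n)
    show ?case
    proof (cases n)
      case 0 then show ?thesis using A by simp
    next
      case (Suc m)
      have "(A * ?B) $ n = 0" using AB Suc by simp
      then have "(\<Sum>i=0..n. A $ i * ?B $ (n - i)) = 0" by (simp add: fps_mult_nth)
      moreover have "(\<Sum>i=0..n. A $ i * ?B $ (n - i)) = A $ 0 * ?B $ n + (\<Sum>i=1..n. A $ i * ?B $ (n - i))"
        by (simp add: sum.atLeast_Suc_atMost Suc)
      ultimately have "?B $ n = - (\<Sum>i=1..n. A $ i * ?B $ (n - i))" using A by simp
      moreover have "(\<Sum>i=1..n. A $ i * ?B $ (n - i)) \<in> \<int>"
        using A less Suc by (intro Ints_sum Ints_mult) (auto simp: intfps_def)
      ultimately show ?thesis by simp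
    qed
  qed
  then show ?thesis by (simp add: intfps_def)
qed

lemma intfps_P: "intfps (P k N)"
  unfolding P_def by (intro intfps_prod intfps_diff) auto

lemma intfps_f: "intfps (f k)"
  by (simp add: intfps_def f_nth) (metis intfps_P intfps_def)

definition icong :: "int \<Rightarrow> rat fps \<Rightarrow> rat fps \<Rightarrow> bool" where
  "icong m A B \<longleftrightarrow> (\<exists>C. intfps C \<and> A - B = of_int m * C)"

lemma icong_refl[simp]: "icong m A A" unfolding icong_def by (rule exI[of _ 0]) simp
lemma icong_sym: "icong m A B \<Longrightarrow> icong m B A"
  unfolding icong_def by (metis intfps_uminus minus_diff_eq mult_minus_right)
lemma icong_trans: "icong m A B \<Longrightarrow> icong m B C \<Longrightarrow> icong m A C"
  unfolding icong_def
proof (elim exE conjE)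
  fix C1 C2 assume "intfps C1" "A - B = of_int m * C1" "intfps C2" "B - C = of_int m * C2"
  then show "\<exists>C'. intfps C' \<and> A - C = of_int m * C'"
    by (intro exI[of _ "C1 + C2"]) (auto intro: intfps_add simp: algebra_simps)
qed
lemma icong_add: "icong m A B \<Longrightarrow> icong m C F \<Longrightarrow> icong m (A + C) (B + F)"
  unfolding icong_def
proof (elim exE conjE)
  fix C1 C2 assume "intfps C1" "A - B = of_int m * C1" "intfps C2" "C - F = of_int m * C2"
  then show "\<exists>C'. intfps C' \<and> A + C - (B + F) = of_int m * C'"
    by (intro exI[of _ "C1 + C2"]) (auto intro: intfps_add simp: algebra_simps)
qed
lemma icong_mult: "icong m A B \<Longrightarrow> intfps G \<Longrightarrow> icong m (G * A) (G * B)"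
  unfolding icong_def
proof (elim exE conjE)
  fix C1 assume "intfps C1" "A - B = of_int m * C1" "intfps G"
  then show "\<exists>C'. intfps C' \<and> G * A - G * B = of_int m * C'"
    by (intro exI[of _ "G * C1"]) (auto intro: intfps_mult simp: algebra_simps right_diff_distrib[symmetric])
qed
lemma icong_E: "icong m A B \<Longrightarrow> icong m (E A) (E B)"
  unfolding icong_def
proof (elim exE conjE)
  fix C1 assume "intfps C1" "A - B = of_int m * C1"
  then show "\<exists>C'. intfps C' \<and> E A - E B = of_int m * C'"
    by (intro exI[of _ "E C1"]) (auto intro: intfps_E simp: E_diff[symmetric] E_of_int_mult)
qed
lemma icong_zero: "intfps C \<Longrightarrow> m dvd c \<Longrightarrow> icong m (of_int c * C) 0"
  unfolding icong_def
proof -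
  assume "intfps C" "m dvd c"
  then obtain k where "c = m * k" by blast
  then show "\<exists>C'. intfps C' \<and> of_int c * C - 0 = of_int m * C'"
    using \<open>intfps C\<close> by (intro exI[of _ "of_int k * C"]) (auto intro: intfps_mult)
qed
lemma icong_fps_cong: "icong m A B \<Longrightarrow> fps_cong A B m"
  unfolding icong_def fps_cong_def
proof (elim exE conjE, intro allI)
  fix C n assume "intfps C" "A - B = of_int m * C"
  then have "A $ n - B $ n = of_int m * C $ n" by (metis fps_sub_nth fps_mult_left_const_nth fps_of_int)
  moreover obtain c where "C $ n = of_int c" using \<open>intfps C\<close> unfolding intfps_def by (meson Ints_cases)
  ultimately show "\<exists>c. A $ n - B $ n = rat_of_int (m * c)" by auto
qed


definition ip :: "rat fps \<Rightarrow> int \<Rightarrow> rat fps" where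
  "ip g z = (if z \<ge> 0 then g ^ nat z else inverse g ^ nat (- z))"

lemma ip_add: assumes "g $ 0 \<noteq> 0" shows "ip g (a + b) = ip g a * ip g b"
proof -
  have gi: "g * inverse g = 1" using assms by (simp add: inverse_mult_eq_1')
  have c1: "g ^ (x + y) * inverse g ^ y = g ^ x" for x y
    by (simp add: power_add mult.assoc power_mult_distrib[symmetric] gi)
  have c2: "inverse g ^ (x + y) * g ^ y = inverse g ^ x" for x y
    by (simp add: power_add mult.assoc power_mult_distrib[symmetric] gi mult.commute)
  show ?thesis
  proof (cases "a \<ge> 0"; cases "b \<ge> 0")
    assume "a \<ge> 0" "b \<ge> 0" then show ?thesis by (simp add: ip_def nat_add_distrib power_add)
  next
    assume a: "a \<ge> 0" and b: "\<not> b \<ge> 0"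
    show ?thesis
    proof (cases "a + b \<ge> 0")
      case True
      then have "nat a = nat (a + b) + nat (- b)" using b by simp
      then show ?thesis using a b True c1[of "nat (a+b)" "nat (-b)"] by (simp add: ip_def)
    next
      case False
      then have "nat (- b) = nat (-(a + b)) + nat a" using a by simp
      then show ?thesis using a b False c2[of "nat (-(a+b))" "nat a"] by (simp add: ip_def mult.commute)
    qed
  next
    assume a: "\<not> a \<ge> 0" and b: "b \<ge> 0"
    show ?thesis
    proof (cases "a + b \<ge> 0")
      case True
      then have "nat b = nat (a + b) + nat (- a)" using a by simp
      then show ?thesis using a b True c1[of "nat (a+b)" "nat (-a)"] by (simp add: ip_def mult.commute)
    next
      case False
      then have "nat (- a) = nat (-(a + b)) + nat b" using b by simp
      then show ?thesis using a b False c2[of "nat (-(a+b))" "nat b"] by (simp add: ip_def)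
    qed
  next
    assume "\<not> a \<ge> 0" "\<not> b \<ge> 0"
    moreover have "nat (- a - b) = nat (- a) + nat (- b)" using calculation by simp
    ultimately show ?thesis by (simp add: ip_def power_add)
  qed
qed

lemma ip_0[simp]: "ip g 0 = 1" by (simp add: ip_def)
lemma ip_nth0: "g $ 0 = 1 \<Longrightarrow> ip g z $ 0 = 1"
  by (simp add: ip_def fps_nth_power_0)
lemma ip_mult_nat: "g $ 0 \<noteq> 0 \<Longrightarrow> ip g (int n * z) = ip g z ^ n"
  by (induction n) (simp_all add: ip_add distrib_right)
lemma intfps_ip: "intfps g \<Longrightarrow> g $ 0 = 1 \<Longrightarrow> intfps (ip g z)"
  by (simp add: ip_def intfps_power intfps_inverse)
lemma D_ip: "g $ 0 \<noteq> 0 \<Longrightarrow> D (ip g z) = ip (D g) z"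
  by (simp add: ip_def D_power D_inverse)

type_synonym vec = "int \<times> int \<times> int \<times> int \<times> int"

fun mon :: "vec \<Rightarrow> rat fps" where
  "mon (a, b, c, d, e) = ip (f 1) a * ip (f 2) b * ip (f 4) c * ip (f 8) d * ip (f 16) e"

fun vadd :: "vec \<Rightarrow> vec \<Rightarrow> vec" where
  "vadd (a, b, c, d, e) (a', b', c', d', e') = (a + a', b + b', c + c', d + d', e + e')"
fun vsc :: "int \<Rightarrow> vec \<Rightarrow> vec" where
  "vsc k (a, b, c, d, e) = (k * a, k * b, k * c, k * d, k * e)"

lemma mon_mult: "mon v * mon w = mon (vadd v w)"
  by (cases v; cases w) (simp add: ip_add mult_ac)

lemma mon_power: "mon v ^ n = mon (vsc (int n) v)"
  by (cases v) (simp add: ip_mult_nat power_mult_distrib)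

lemma mon_zero[simp]: "mon (0,0,0,0,0) = 1" by simp

lemma intfps_mon: "intfps (mon v)"
  by (cases v) (simp add: intfps_ip intfps_f intfps_mult)

lemma mon_nth0: "mon v $ 0 = 1"
  by (cases v) (simp add: ip_nth0)

lemma D_mon: "D (mon (a, b, c, d, 0)) = mon (0, a, b, c, d)"
  by (simp add: D_mult D_ip D_f)

declare mon.simps[simp del]


fun qbin :: "'a::comm_ring_1 \<Rightarrow> nat \<Rightarrow> nat \<Rightarrow> 'a" where
  "qbin p 0 k = (if k = 0 then 1 else 0)"
| "qbin p (Suc N) k = (case k of 0 \<Rightarrow> 1 | Suc i \<Rightarrow> qbin p N (Suc i) + p ^ (N - i) * qbin p N i)"

lemma qbin_gt: "N < k \<Longrightarrow> qbin p N k = 0"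
proof (induction N arbitrary: k)
  case 0 then show ?case by simp
next
  case (Suc N) then show ?case by (cases k) auto
qed

lemma qbin_0[simp]: "qbin p N 0 = 1" by (cases N) auto

lemma qbin_NN[simp]: "qbin p N N = 1"
  by (induction N) (auto simp: qbin_gt)

lemma tri_Suc: "Suc i * (Suc i - 1) div 2 = i * (i - 1) div 2 + i"
proof -
  have "Suc i * i = i * (i - 1) + 2 * i" by (cases i) (auto simp: algebra_simps)
  moreover have "even (i * (i - 1))" by (cases i) auto
  ultimately show ?thesis by auto
qed

lemma cauchy:
  fixes p y z :: "'a::comm_ring_1"
  shows "(\<Prod>j<N. y + z * p ^ j) = (\<Sum>k\<le>N. qbin p N k * p ^ (k * (k - 1) div 2) * z ^ k * y ^ (N - k))"
proof (induction N)
  case 0 then show ?case by simp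
next
  case (Suc N)
  let ?T = "\<lambda>k::nat. k * (k - 1) div 2"
  let ?S = "\<Sum>k\<le>N. qbin p N k * p ^ ?T k * z ^ k * y ^ (N - k)"
  have "(\<Sum>k\<le>Suc N. qbin p (Suc N) k * p ^ ?T k * z ^ k * y ^ (Suc N - k)) =
     y ^ Suc N + (\<Sum>i\<le>N. (qbin p N (Suc i) + p ^ (N - i) * qbin p N i) * p ^ ?T (Suc i) * z ^ Suc i * y ^ (N - i))"
    by (subst sum.atMost_Suc_shift) simp
  also have "\<dots> = (y ^ Suc N + (\<Sum>i\<le>N. qbin p N (Suc i) * p ^ ?T (Suc i) * z ^ Suc i * y ^ (N - i)))
     + (\<Sum>i\<le>N. p ^ (N - i) * qbin p N i * p ^ ?T (Suc i) * z ^ Suc i * y ^ (N - i))"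
    by (simp add: distrib_right sum.distrib)
  also have "y ^ Suc N + (\<Sum>i\<le>N. qbin p N (Suc i) * p ^ ?T (Suc i) * z ^ Suc i * y ^ (N - i))
      = (\<Sum>k\<le>Suc N. qbin p N k * p ^ ?T k * z ^ k * y ^ (Suc N - k))"
    by (simp only: sum.atMost_Suc_shift) simp
  also have "\<dots> = ?S * y"
    by (simp add: sum.atMost_Suc qbin_gt sum_distrib_left Suc_diff_le mult_ac)
  also have "(\<Sum>i\<le>N. p ^ (N - i) * qbin p N i * p ^ ?T (Suc i) * z ^ Suc i * y ^ (N - i)) = ?S * (z * p ^ N)"
  proof -
    have "p ^ (N - i) * qbin p N i * p ^ ?T (Suc i) * z ^ Suc i * y ^ (N - i) =
          qbin p N i * p ^ ?T i * z ^ i * y ^ (N - i) * (z * p ^ N)" if "i \<le> N" for i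
    proof -
      have e: "N - i + ?T (Suc i) = ?T i + N" using that unfolding tri_Suc by simp
      have "p ^ (N - i) * p ^ ?T (Suc i) = p ^ ?T i * p ^ N"
        by (metis e power_add)
      then show ?thesis by (simp add: algebra_simps)
    qed
    then show ?thesis by (simp add: sum_distrib_right)
  qed
  finally show ?case using Suc by (simp add: distrib_left algebra_simps)
qed

definition pp :: "'a::comm_ring_1 \<Rightarrow> nat \<Rightarrow> 'a" where "pp p n = (\<Prod>i\<in>{1..n}. 1 - p ^ i)"

lemma pp_0[simp]: "pp p 0 = 1" by (simp add: pp_def)
lemma pp_Suc: "pp p (Suc n) = pp p n * (1 - p ^ Suc n)"
  by (simp add: pp_def atLeastAtMostSuc_conv mult.commute)

lemma qbin_prod: "k \<le> N \<Longrightarrow> qbin p N k * pp p k * pp p (N - k) = pp p N"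
proof (induction N arbitrary: k)
  case 0 then show ?case by simp
next
  case (Suc N)
  show ?case
  proof (cases k)
    case 0 then show ?thesis by simp
  next
    case (Suc i)
    show ?thesis
    proof (cases "i = N")
      case True then show ?thesis using Suc by (simp add: qbin_gt)
    next
      case False
      then have iN: "i < N" using Suc \<open>k \<le> Suc N\<close> by simp
      have IH1: "qbin p N (Suc i) * pp p (Suc i) * pp p (N - Suc i) = pp p N" using Suc.IH iN by simp
      have IH2: "qbin p N i * pp p i * pp p (N - i) = pp p N" using Suc.IH iN by simp
      have Ni: "N - i = Suc (N - Suc i)" using iN by simp
      have "qbin p (Suc N) k * pp p k * pp p (Suc N - k) =
        qbin p N (Suc i) * pp p (Suc i) * pp p (N - i) + p ^ (N - i) * (qbin p N i * pp p (Suc i) * pp p (N - i))"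
        using Suc by (simp add: algebra_simps)
      also have "qbin p N (Suc i) * pp p (Suc i) * pp p (N - i) = pp p N * (1 - p ^ (N - i))"
        using IH1 by (simp add: Ni pp_Suc mult.assoc[symmetric])
      also have "qbin p N i * pp p (Suc i) * pp p (N - i) = pp p N * (1 - p ^ Suc i)"
      proof -
        have "qbin p N i * pp p (Suc i) * pp p (N - i) = (qbin p N i * pp p i * pp p (N - i)) * (1 - p ^ Suc i)"
          by (simp only: pp_Suc mult_ac)
        then show ?thesis using IH2 by simp
      qed
      also have "pp p N * (1 - p ^ (N - i)) + p ^ (N - i) * (pp p N * (1 - p ^ Suc i)) = pp p (Suc N)"
      proof -
        have e: "N - i + Suc i = Suc N" using iN by simp
        have "p ^ (N - i) * p ^ Suc i = p ^ Suc N" by (metis e power_add)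
        moreover have "pp p N * (1 - x) + x * (pp p N * (1 - y)) = pp p N * (1 - x * y)" for x y
          by (simp add: algebra_simps)
        ultimately show ?thesis by (simp only: pp_Suc)
      qed
      finally show ?thesis .
    qed
  qed
qed


abbreviation X :: "rat fps" where "X \<equiv> fps_X"

lemma pp_X: "pp (X ^ d) n = P d n"
  unfolding pp_def P_def by (simp add: power_mult[symmetric] mult.commute)

lemma prod_split: fixes n m :: nat shows "(\<Prod>j<n + m. g j) = (\<Prod>j<n. g j) * (\<Prod>j<m. g (n + j) :: 'a::comm_monoid_mult)"
  by (induction m) (simp_all add: mult.assoc)

lemma prod_X_lin: "(\<Prod>j<n. X ^ (2 * j)) = X ^ (n * (n - 1))"
proof (induction n)
  case 0 then show ?case by simp
next
  case (Suc n)
  have "n * (n - 1) + 2 * n = Suc n * n" by (cases n) (auto simp: algebra_simps)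
  then show ?case using Suc by (simp add: power_add[symmetric])
qed

lemma prod_X_tri: "(\<Prod>j<n. X ^ j) = X ^ (n * (n - 1) div 2)"
proof (induction n)
  case 0 then show ?case by simp
next
  case (Suc n)
  have "n * (n - 1) div 2 + n = Suc n * n div 2"
    using tri_Suc[of n] by simp
  then show ?case using Suc by (simp add: power_add[symmetric])
qed

definition ephi :: "nat \<Rightarrow> nat \<Rightarrow> nat" where "ephi n k = nat ((int k - int n) ^ 2)"
definition epsi :: "nat \<Rightarrow> nat \<Rightarrow> nat" where "epsi n k = nat ((int k - int n) * (int k - int n - 1) div 2)"

definition L :: "nat \<Rightarrow> rat fps" where "L n = (\<Prod>j<n. 1 + X ^ (2 * j + 1))"
definition R :: "nat \<Rightarrow> rat fps" where "R n = (\<Prod>j<n. 1 + X ^ (j + 1))"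

lemma expo_phi: assumes "k \<le> 2 * n" "n \<ge> 1"
  shows "2 * (k * (k - 1) div 2) + (2 * n - 1) * (2 * n - k) = n * (n - 1) + n * (2 * n - 1) + ephi n k"
proof -
  have ev: "even (k * (k - 1))" by (cases k) auto
  have i1: "int (k * (k - 1)) = int k * (int k - 1)" by (cases k) (auto simp: algebra_simps)
  have i2: "int ((2 * n - 1) * (2 * n - k)) = (2 * int n - 1) * (2 * int n - int k)"
    using assms by (simp add: of_nat_diff)
  have i3: "int (n * (n - 1)) = int n * (int n - 1)" by (cases n) (auto simp: algebra_simps)
  have i4: "int (n * (2 * n - 1)) = int n * (2 * int n - 1)" using assms by (simp add: of_nat_diff)
  have i5: "int (ephi n k) = (int k - int n) ^ 2" by (simp add: ephi_def)
  have "int (k * (k - 1) + (2 * n - 1) * (2 * n - k)) = int (n * (n - 1) + n * (2 * n - 1) + ephi n k)"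
    unfolding of_nat_add i1 i2 i3 i4 i5 by (simp add: algebra_simps power2_eq_square)
  then show ?thesis using ev by (simp add: dvd_mult_div_cancel del: of_nat_add)
qed

lemma fin_phi: assumes "n \<ge> 1"
  shows "L n ^ 2 = (\<Sum>k\<le>2 * n. qbin (X ^ 2) (2 * n) k * X ^ ephi n k)"
proof -
  let ?c = "n * (n - 1) + n * (2 * n - 1)"
  have "(\<Prod>j<2 * n. X ^ (2 * n - 1) + 1 * (X ^ 2) ^ j) =
        (\<Sum>k\<le>2 * n. qbin (X ^ 2) (2 * n) k * (X ^ 2) ^ (k * (k - 1) div 2) * 1 ^ k * (X ^ (2 * n - 1)) ^ (2 * n - k))"
    by (rule cauchy)
  also have "\<dots> = (\<Sum>k\<le>2 * n. X ^ ?c * (qbin (X ^ 2) (2 * n) k * X ^ ephi n k))"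
  proof (rule sum.cong[OF refl])
    fix k assume "k \<in> {..2 * n}"
    then have "2 * (k * (k - 1) div 2) + (2 * n - 1) * (2 * n - k) = ?c + ephi n k"
      using expo_phi assms by simp
    then show "qbin (X ^ 2) (2 * n) k * (X ^ 2) ^ (k * (k - 1) div 2) * 1 ^ k * (X ^ (2 * n - 1)) ^ (2 * n - k)
       = X ^ ?c * (qbin (X ^ 2) (2 * n) k * X ^ ephi n k)"
      by (simp add: power_mult[symmetric] power_add[symmetric] mult_ac)
  qed
  also have "\<dots> = X ^ ?c * (\<Sum>k\<le>2 * n. qbin (X ^ 2) (2 * n) k * X ^ ephi n k)"
    by (simp add: sum_distrib_left)
  finally have rhs: "(\<Prod>j<2 * n. X ^ (2 * n - 1) + 1 * (X ^ 2) ^ j) = X ^ ?c * (\<Sum>k\<le>2 * n. qbin (X ^ 2) (2 * n) k * X ^ ephi n k)" .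
  have "(\<Prod>j<2 * n. X ^ (2 * n - 1) + 1 * (X ^ 2) ^ j) =
        (\<Prod>j<n. X ^ (2 * n - 1) + X ^ (2 * j)) * (\<Prod>j<n. X ^ (2 * n - 1) + X ^ (2 * (n + j)))"
    using prod_split[of "\<lambda>j. X ^ (2 * n - 1) + 1 * (X ^ 2) ^ j" n n] by (simp add: power_mult[symmetric] mult_2)
  also have "(\<Prod>j<n. X ^ (2 * n - 1) + X ^ (2 * j)) = (\<Prod>j<n. X ^ (2 * j) * (1 + X ^ (2 * (n - Suc j) + 1)))"
  proof (rule prod.cong[OF refl])
    fix j assume "j \<in> {..<n}"
    then have e: "2 * j + (2 * (n - Suc j) + 1) = 2 * n - 1" by auto
    have "X ^ (2 * n - 1) = X ^ (2 * j) * X ^ (2 * (n - Suc j) + 1)" by (metis e power_add)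
    then show "X ^ (2 * n - 1) + X ^ (2 * j) = X ^ (2 * j) * (1 + X ^ (2 * (n - Suc j) + 1))"
      by (simp only: distrib_left mult_1_right add.commute)
  qed
  also have "\<dots> = X ^ (n * (n - 1)) * L n"
    unfolding prod.distrib prod_X_lin L_def using prod.nat_diff_reindex[of "\<lambda>j. 1 + X ^ (2 * j + 1)" n] by simp
  also have "(\<Prod>j<n. X ^ (2 * n - 1) + X ^ (2 * (n + j))) = (\<Prod>j<n. X ^ (2 * n - 1) * (1 + X ^ (2 * j + 1)))"
  proof (rule prod.cong[OF refl])
    fix j assume "j \<in> {..<n}"
    have e: "2 * n - 1 + (2 * j + 1) = 2 * (n + j)" using assms by auto
    have "X ^ (2 * (n + j)) = X ^ (2 * n - 1) * X ^ (2 * j + 1)" by (metis e power_add)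
    then show "X ^ (2 * n - 1) + X ^ (2 * (n + j)) = X ^ (2 * n - 1) * (1 + X ^ (2 * j + 1))"
      by (simp only: distrib_left mult_1_right)
  qed
  also have "\<dots> = X ^ (n * (2 * n - 1)) * L n"
    unfolding prod.distrib L_def by (simp add: power_mult[symmetric] mult.commute)
  finally have lhs: "(\<Prod>j<2 * n. X ^ (2 * n - 1) + 1 * (X ^ 2) ^ j) = X ^ ?c * L n ^ 2"
    by (simp add: power_add power2_eq_square mult_ac)
  have "X ^ ?c * L n ^ 2 = X ^ ?c * (\<Sum>k\<le>2 * n. qbin (X ^ 2) (2 * n) k * X ^ ephi n k)"
    using lhs rhs by simp
  then show ?thesis by simp
qed

lemma xx1_nonneg: "(x::int) * (x - 1) \<ge> 0"
  by (cases "x \<ge> 1") (simp_all add: mult_nonpos_nonpos)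
lemma xx1_even: "even ((x::int) * (x - 1))"
  by (cases "even x") auto

lemma nat_half: "even (y::int) \<Longrightarrow> y \<ge> 0 \<Longrightarrow> 2 * nat (y div 2) = nat y"
  by (auto elim!: evenE simp: nat_mult_distrib)

lemma epsi_2: "2 * epsi n k = nat ((int k - int n) * (int k - int n - 1))"
proof -
  have "even ((int k - int n) * (int k - int n - 1))" by (rule xx1_even)
  moreover have "(int k - int n) * (int k - int n - 1) \<ge> 0" by (rule xx1_nonneg)
  ultimately show ?thesis unfolding epsi_def by (rule nat_half)
qed

lemma expo_psi: assumes "k \<le> 2 * n"
  shows "k * (k - 1) div 2 + n * (2 * n - k) = n * (n - 1) div 2 + n * n + epsi n k"
proof -
  have evk: "even (k * (k - 1))" by (cases k) auto
  have evn: "even (n * (n - 1))" by (cases n) auto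
  have i1: "int (k * (k - 1)) = int k * (int k - 1)" by (cases k) (auto simp: algebra_simps)
  have i2: "int (n * (2 * n - k)) = int n * (2 * int n - int k)"
    using assms by (simp add: of_nat_diff)
  have i3: "int (n * (n - 1)) = int n * (int n - 1)" by (cases n) (auto simp: algebra_simps)
  have i5: "int (2 * epsi n k) = (int k - int n) * (int k - int n - 1)"
    unfolding epsi_2 using xx1_nonneg by simp
  have "int (k * (k - 1) + 2 * (n * (2 * n - k))) = int (n * (n - 1) + 2 * (n * n) + 2 * epsi n k)"
    unfolding of_nat_add i5 unfolding of_nat_mult[of 2] i1 i2 i3 by (simp add: algebra_simps)
  then have "k * (k - 1) + 2 * (n * (2 * n - k)) = n * (n - 1) + 2 * (n * n) + 2 * epsi n k"
    by (simp only: of_nat_eq_iff)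
  then show ?thesis using evk evn by (auto elim!: evenE)
qed

lemma fin_psi: assumes "n \<ge> 1"
  shows "R n * (\<Prod>j<n. 1 + X ^ j) = (\<Sum>k\<le>2 * n. qbin X (2 * n) k * X ^ epsi n k)"
proof -
  let ?c = "n * (n - 1) div 2 + n * n"
  have "(\<Prod>j<2 * n. X ^ n + 1 * X ^ j) =
        (\<Sum>k\<le>2 * n. qbin X (2 * n) k * X ^ (k * (k - 1) div 2) * 1 ^ k * (X ^ n) ^ (2 * n - k))"
    by (rule cauchy)
  also have "\<dots> = (\<Sum>k\<le>2 * n. X ^ ?c * (qbin X (2 * n) k * X ^ epsi n k))"
  proof (rule sum.cong[OF refl])
    fix k assume "k \<in> {..2 * n}"
    then have "k * (k - 1) div 2 + n * (2 * n - k) = ?c + epsi n k"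
      using expo_psi by simp
    then show "qbin X (2 * n) k * X ^ (k * (k - 1) div 2) * 1 ^ k * (X ^ n) ^ (2 * n - k)
       = X ^ ?c * (qbin X (2 * n) k * X ^ epsi n k)"
      by (simp add: power_mult[symmetric] power_add[symmetric] mult_ac)
  qed
  also have "\<dots> = X ^ ?c * (\<Sum>k\<le>2 * n. qbin X (2 * n) k * X ^ epsi n k)"
    by (simp add: sum_distrib_left)
  finally have rhs: "(\<Prod>j<2 * n. X ^ n + 1 * X ^ j) = X ^ ?c * (\<Sum>k\<le>2 * n. qbin X (2 * n) k * X ^ epsi n k)" .
  have "(\<Prod>j<2 * n. X ^ n + 1 * X ^ j) =
        (\<Prod>j<n. X ^ n + X ^ j) * (\<Prod>j<n. X ^ n + X ^ (n + j))"
    using prod_split[of "\<lambda>j. X ^ n + 1 * X ^ j" n n] by (simp add: mult_2)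
  also have "(\<Prod>j<n. X ^ n + X ^ j) = (\<Prod>j<n. X ^ j * (1 + X ^ ((n - Suc j) + 1)))"
  proof (rule prod.cong[OF refl])
    fix j assume "j \<in> {..<n}"
    then have e: "j + ((n - Suc j) + 1) = n" by auto
    have "X ^ n = X ^ j * X ^ ((n - Suc j) + 1)" by (metis e power_add)
    then show "X ^ n + X ^ j = X ^ j * (1 + X ^ ((n - Suc j) + 1))"
      by (simp only: distrib_left mult_1_right add.commute)
  qed
  also have "\<dots> = X ^ (n * (n - 1) div 2) * R n"
    unfolding prod.distrib prod_X_tri R_def using prod.nat_diff_reindex[of "\<lambda>j. 1 + X ^ (j + 1)" n] by simp
  also have "(\<Prod>j<n. X ^ n + X ^ (n + j)) = (\<Prod>j<n. X ^ n * (1 + X ^ j))"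
    by (rule prod.cong[OF refl]) (simp add: distrib_left power_add)
  also have "\<dots> = X ^ (n * n) * (\<Prod>j<n. 1 + X ^ j)"
    unfolding prod.distrib by (simp add: power_mult[symmetric] mult.commute)
  finally have lhs: "(\<Prod>j<2 * n. X ^ n + 1 * X ^ j) = X ^ ?c * (R n * (\<Prod>j<n. 1 + X ^ j))"
    by (simp add: power_add mult_ac)
  have "X ^ ?c * (R n * (\<Prod>j<n. 1 + X ^ j)) = X ^ ?c * (\<Sum>k\<le>2 * n. qbin X (2 * n) k * X ^ epsi n k)"
    using lhs rhs by simp
  then show ?thesis by simp
qed


lemma P_Suc: "P k (Suc N) = P k N * (1 - X ^ (Suc N * k))"
  by (simp add: P_def atLeastAtMostSuc_conv mult.commute)

lemma P_lt: "P k n = (\<Prod>i<n. 1 - X ^ (Suc i * k))"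
  by (induction n) (simp_all add: P_Suc P_def[of k 0])

definition Oo :: "nat \<Rightarrow> nat \<Rightarrow> rat fps" where "Oo k n = (\<Prod>j<n. 1 - X ^ ((2 * j + 1) * k))"

lemma P_split2: "P k (2 * n) = Oo k n * P (2 * k) n"
proof (induction n)
  case 0 then show ?case by (simp add: Oo_def P_def)
next
  case (Suc n)
  have "P k (2 * Suc n) = P k (2 * n) * (1 - X ^ ((2 * n + 1) * k)) * (1 - X ^ ((2 * n + 2) * k))"
    by (simp add: P_Suc mult.assoc)
  also have "\<dots> = Oo k (Suc n) * P (2 * k) (Suc n)"
    using Suc by (simp add: P_Suc Oo_def mult_ac algebra_simps)
  finally show ?case .
qed

lemma L_O: "L n * Oo 1 n = Oo 2 n"
  unfolding L_def Oo_def prod.distrib[symmetric]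
  by (rule prod.cong[OF refl]) (simp add: algebra_simps power_mult[symmetric] power_add[symmetric] mult_2_right)

lemma L_P: "L n * P 1 (2 * n) * P 4 n = P 2 (2 * n) * P 2 n"
proof -
  have s1: "P 1 (2 * n) = Oo 1 n * P 2 n" using P_split2[of 1 n] by simp
  have "L n * P 1 (2 * n) * P 4 n = (L n * Oo 1 n) * P 2 n * P 4 n" unfolding s1 by (simp only: mult_ac)
  also have "\<dots> = (Oo 2 n * P 4 n) * P 2 n" unfolding L_O by (simp only: mult_ac)
  also have "\<dots> = P 2 (2 * n) * P 2 n" using P_split2[of 2 n] by simp
  finally show ?thesis .
qed

lemma R_P: "R n * P 1 n = P 2 n"
  unfolding R_def P_lt prod.distrib[symmetric]
  by (rule prod.cong[OF refl]) (simp add: algebra_simps power_mult[symmetric] power_add[symmetric] mult_2_right)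

lemma prod_1X: "(\<Prod>j<Suc m. 1 + X ^ j) = 2 * R m"
  unfolding R_def prod.lessThan_Suc_shift by simp

lemma f_inv: "k \<ge> 1 \<Longrightarrow> f k * inverse (f k) = 1"
  by (simp add: inverse_mult_eq_1')

lemma teq_fP: "k \<ge> 1 \<Longrightarrow> M \<le> N + 1 \<Longrightarrow> teq M (P k N) (f k)"
  by (rule teq_sym, rule teq_mono[OF teq_f_P]) auto

lemma teq_cancel: assumes "teq M (A * G) B" "G $ 0 \<noteq> 0" shows "teq M A (B * inverse G)"
proof -
  have "teq M (A * G * inverse G) (B * inverse G)" by (intro teq_mult assms teq_refl)
  then show ?thesis using assms(2) by (simp add: mult.assoc inverse_mult_eq_1')
qed

lemma qbin_teq: assumes "d \<ge> 1" "k \<le> N" "M \<le> k" "M \<le> N - k"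
  shows "teq M (qbin (X ^ d) N k * f d) 1"
proof -
  have pr: "qbin (X ^ d) N k * P d k * P d (N - k) = P d N"
    using qbin_prod[OF assms(2), of "X ^ d"] by (simp add: pp_X)
  have t1: "teq M (qbin (X ^ d) N k * P d k * P d (N - k)) (qbin (X ^ d) N k * f d * f d)"
    using assms by (intro teq_mult teq_refl teq_fP) auto
  have t2: "teq M (P d N) (f d)" using assms by (intro teq_fP) auto
  have "teq M (qbin (X ^ d) N k * f d * f d) (f d)"
    using teq_trans[OF teq_sym[OF t1[unfolded pr]] t2] .
  then have "teq M (qbin (X ^ d) N k * f d) (f d * inverse (f d))"
    using assms(1) by (intro teq_cancel) auto
  then show ?thesis using f_inv[OF assms(1)] by simp
qed

lemma lim_sum: assumes "d \<ge> 1" "\<forall>k\<le>N. e k < M \<longrightarrow> M \<le> k \<and> M \<le> N - k"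
  shows "teq M (f d * (\<Sum>k\<le>N. qbin (X ^ d) N k * X ^ e k)) (\<Sum>k\<le>N. X ^ e k)"
  unfolding sum_distrib_left
proof (rule teq_sum)
  fix k assume k: "k \<in> {..N}"
  show "teq M (f d * (qbin (X ^ d) N k * X ^ e k)) (X ^ e k)"
  proof (cases "e k < M")
    case True
    then have "teq M (qbin (X ^ d) N k * f d) 1" using assms k by (intro qbin_teq) auto
    then have t: "teq M (qbin (X ^ d) N k * f d * X ^ e k) (1 * X ^ e k)" by (intro teq_mult teq_refl)
    have eq: "f d * (qbin (X ^ d) N k * X ^ e k) = qbin (X ^ d) N k * f d * X ^ e k" by (simp only: mult_ac)
    show ?thesis unfolding eq using t by (simp only: mult_1_left)
  next
    case False
    then have a: "teq M (X ^ e k * (f d * qbin (X ^ d) N k)) 0" and b: "teq M (X ^ e k * 1) 0"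
      by (intro teq_X_power, simp)+
    have eq: "f d * (qbin (X ^ d) N k * X ^ e k) = X ^ e k * (f d * qbin (X ^ d) N k)" by (simp only: mult_ac)
    show ?thesis unfolding eq using teq_trans[OF a teq_sym[OF b]] by (simp only: mult_1_right)
  qed
qed

lemma count_nth: "finite S \<Longrightarrow> (\<Sum>k\<in>S. X ^ e k) $ m = of_nat (card {k\<in>S. e k = m})"
proof -
  assume S: "finite S"
  have "(\<Sum>k\<in>S. X ^ e k) $ m = (\<Sum>k\<in>S. if e k = m then 1 else 0)"
    by (simp add: fps_sum_nth eq_commute)
  also have "\<dots> = (\<Sum>k\<in>{k\<in>S. e k = m}. 1)" using S by (simp add: sum.inter_filter[symmetric])
  also have "\<dots> = of_nat (card {k\<in>S. e k = m})" by simp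
  finally show ?thesis .
qed

lemma abs_le_sq: "\<bar>x::int\<bar> \<le> x ^ 2"
proof -
  have "0 \<le> \<bar>x\<bar> * (\<bar>x\<bar> - 1)" by (rule xx1_nonneg)
  then show ?thesis by (simp add: power2_eq_square algebra_simps)
qed

lemma abs_le_tri: "\<bar>x::int\<bar> \<le> x * (x - 1) + 1"
proof (cases "x \<ge> 0")
  case True
  have "x * (x - 1) + 1 - x = (x - 1) ^ 2" by (simp add: power2_eq_square algebra_simps)
  then show ?thesis using True by (smt (verit) zero_le_power2)
next
  case False
  have "x * (x - 1) + 1 + x = x ^ 2 + 1" by (simp add: power2_eq_square algebra_simps)
  then show ?thesis using False by (smt (verit) zero_le_power2)
qed

definition phi_s :: "rat fps" where "phi_s = Abs_fps (\<lambda>m. of_nat (card {i::int. i ^ 2 = int m}))"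
definition psi_s :: "rat fps" where "psi_s = Abs_fps (\<lambda>m. of_nat (card {i::int. i * (i - 1) = 2 * int m}))"

lemma card_phi: assumes "m < M" "M \<le> n"
  shows "card {k\<in>{..2 * n}. ephi n k = m} = card {i::int. i ^ 2 = int m}"
proof -
  let ?h = "\<lambda>i::int. nat (i + int n)"
  have bnd: "\<bar>i\<bar> \<le> int n" if "i ^ 2 = int m" for i
    using abs_le_sq[of i] that assms by linarith
  have inj: "inj_on ?h {i::int. i ^ 2 = int m}"
  proof (rule inj_onI)
    fix x y assume "x \<in> {i::int. i ^ 2 = int m}" "y \<in> {i::int. i ^ 2 = int m}" "?h x = ?h y"
    moreover have "x + int n \<ge> 0" "y + int n \<ge> 0" using bnd calculation by force+
    ultimately show "x = y" by simp
  qed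
  have img: "?h ` {i::int. i ^ 2 = int m} = {k\<in>{..2 * n}. ephi n k = m}"
  proof
    show "?h ` {i::int. i ^ 2 = int m} \<subseteq> {k\<in>{..2 * n}. ephi n k = m}"
    proof
      fix k assume "k \<in> ?h ` {i::int. i ^ 2 = int m}"
      then obtain i where i: "i ^ 2 = int m" "k = ?h i" by auto
      have "\<bar>i\<bar> \<le> int n" using bnd i by auto
      then have "int k = i + int n" using i by auto
      then show "k \<in> {k\<in>{..2 * n}. ephi n k = m}" using \<open>\<bar>i\<bar> \<le> int n\<close> i by (auto simp: ephi_def)
    qed
  next
    show "{k\<in>{..2 * n}. ephi n k = m} \<subseteq> ?h ` {i::int. i ^ 2 = int m}"
    proof
      fix k assume "k \<in> {k\<in>{..2 * n}. ephi n k = m}"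
      then have "(int k - int n) ^ 2 = int m" "k = ?h (int k - int n)" by (auto simp: ephi_def)
      then show "k \<in> ?h ` {i::int. i ^ 2 = int m}" by blast
    qed
  qed
  show ?thesis using card_image[OF inj] img by simp
qed

lemma card_psi: assumes "m < M" "2 * M \<le> n"
  shows "card {k\<in>{..2 * n}. epsi n k = m} = card {i::int. i * (i - 1) = 2 * int m}"
proof -
  let ?h = "\<lambda>i::int. nat (i + int n)"
  have bnd: "\<bar>i\<bar> \<le> int n" if "i * (i - 1) = 2 * int m" for i
    using abs_le_tri[of i] that assms by linarith
  have inj: "inj_on ?h {i::int. i * (i - 1) = 2 * int m}"
  proof (rule inj_onI)
    fix x y assume "x \<in> {i::int. i * (i - 1) = 2 * int m}" "y \<in> {i::int. i * (i - 1) = 2 * int m}" "?h x = ?h y"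
    moreover have "x + int n \<ge> 0" "y + int n \<ge> 0" using bnd calculation by force+
    ultimately show "x = y" by simp
  qed
  have ep: "int (epsi n k) * 2 = (int k - int n) * (int k - int n - 1)" for k
    using epsi_2[of n k] xx1_nonneg[of "int k - int n"] by (simp add: mult.commute)
  have img: "?h ` {i::int. i * (i - 1) = 2 * int m} = {k\<in>{..2 * n}. epsi n k = m}"
  proof
    show "?h ` {i::int. i * (i - 1) = 2 * int m} \<subseteq> {k\<in>{..2 * n}. epsi n k = m}"
    proof
      fix k assume "k \<in> ?h ` {i::int. i * (i - 1) = 2 * int m}"
      then obtain i where i: "i * (i - 1) = 2 * int m" "k = ?h i" by auto
      have "\<bar>i\<bar> \<le> int n" using bnd i by auto
      then have "int k = i + int n" using i by auto
      then have "int (epsi n k) * 2 = int m * 2" using ep[of k] i by simp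
      then show "k \<in> {k\<in>{..2 * n}. epsi n k = m}" using \<open>\<bar>i\<bar> \<le> int n\<close> \<open>int k = i + int n\<close> by auto
    qed
  next
    show "{k\<in>{..2 * n}. epsi n k = m} \<subseteq> ?h ` {i::int. i * (i - 1) = 2 * int m}"
    proof
      fix k assume k: "k \<in> {k\<in>{..2 * n}. epsi n k = m}"
      then have "(int k - int n) * (int k - int n - 1) = 2 * int m" using ep[of k] by auto
      moreover have "k = ?h (int k - int n)" by auto
      ultimately show "k \<in> ?h ` {i::int. i * (i - 1) = 2 * int m}" by blast
    qed
  qed
  show ?thesis using card_image[OF inj] img by simp
qed

lemma phi_prod: "phi_s = f 2 ^ 2 * inverse (f 1 * f 4) * (f 2 ^ 2 * inverse (f 1 * f 4)) * f 2"
proof (rule teq_eq)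
  fix M :: nat
  define n where "n = 3 * M + 1"
  have n1: "n \<ge> 1" by (simp add: n_def)
  have "teq M (L n * P 1 (2 * n) * P 4 n) (L n * f 1 * f 4)"
    by (intro teq_mult teq_refl teq_fP) (auto simp: n_def)
  moreover have "teq M (P 2 (2 * n) * P 2 n) (f 2 * f 2)"
    by (intro teq_mult teq_refl teq_fP) (auto simp: n_def)
  ultimately have "teq M (L n * f 1 * f 4) (f 2 * f 2)"
    using L_P teq_trans teq_sym by metis
  then have "teq M (L n * (f 1 * f 4)) (f 2 ^ 2)" by (simp add: mult.assoc power2_eq_square)
  then have A: "teq M (L n) (f 2 ^ 2 * inverse (f 1 * f 4))" by (rule teq_cancel) simp
  have C: "teq M (f 2 * L n ^ 2) (\<Sum>k\<le>2 * n. X ^ ephi n k)"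
    unfolding fin_phi[OF n1]
  proof (rule lim_sum)
    show "\<forall>k\<le>2 * n. ephi n k < M \<longrightarrow> M \<le> k \<and> M \<le> 2 * n - k"
    proof (intro allI impI)
      fix k assume k: "k \<le> 2 * n" "ephi n k < M"
      have "\<bar>int k - int n\<bar> \<le> int (ephi n k)" using abs_le_sq[of "int k - int n"] by (simp add: ephi_def)
      then have "- int (ephi n k) \<le> int k - int n" "int k - int n \<le> int (ephi n k)" by (simp_all add: abs_le_iff)
      moreover have "int (ephi n k) < int M" using k by simp
      moreover have "int n = 3 * int M + 1" by (simp add: n_def)
      ultimately have "int M \<le> int k" "int M + int k \<le> 2 * int n" by linarith+
      then show "M \<le> k \<and> M \<le> 2 * n - k" by linarith
    qed
  qed simp
  have D: "teq M (\<Sum>k\<le>2 * n. X ^ ephi n k) phi_s"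
    unfolding teq_def
  proof (intro allI impI)
    fix m assume "m < M"
    then have c: "card {k\<in>{..2 * n}. ephi n k = m} = card {i::int. i ^ 2 = int m}"
      by (intro card_phi) (auto simp: n_def)
    show "(\<Sum>k\<le>2 * n. X ^ ephi n k) $ m = phi_s $ m"
      by (simp only: count_nth finite_atMost c) (simp add: phi_s_def)
  qed
  have "teq M (f 2 * L n ^ 2) (f 2 * (f 2 ^ 2 * inverse (f 1 * f 4)) ^ 2)"
    by (intro teq_mult teq_power teq_refl A)
  then have "teq M (f 2 * L n ^ 2) (f 2 ^ 2 * inverse (f 1 * f 4) * (f 2 ^ 2 * inverse (f 1 * f 4)) * f 2)"
    by (simp add: power2_eq_square mult_ac)
  then show "teq M phi_s (f 2 ^ 2 * inverse (f 1 * f 4) * (f 2 ^ 2 * inverse (f 1 * f 4)) * f 2)"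
    using teq_trans[OF teq_sym[OF D] teq_sym[OF C]] teq_trans by blast
qed

lemma R_teq: assumes "M \<le> m" shows "teq M (R m) (f 2 * inverse (f 1))"
proof -
  have "teq M (R m * P 1 m) (R m * f 1)" using assms by (intro teq_mult teq_refl teq_fP) auto
  moreover have "teq M (P 2 m) (f 2)" using assms by (intro teq_fP) auto
  ultimately have "teq M (R m * f 1) (f 2)" using R_P teq_sym teq_trans by metis
  then show ?thesis by (rule teq_cancel) simp
qed

lemma psi_prod: "psi_s = 2 * (f 2 * inverse (f 1)) * (f 2 * inverse (f 1)) * f 1"
proof (rule teq_eq)
  fix M :: nat
  define n where "n = 3 * M + 1"
  have n1: "n \<ge> 1" by (simp add: n_def)
  have fp: "R n * (2 * R (3 * M)) = (\<Sum>k\<le>2 * n. qbin X (2 * n) k * X ^ epsi n k)"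
    using fin_psi[OF n1] prod_1X[of "3 * M"] by (simp add: n_def)
  have C: "teq M (f 1 * (R n * (2 * R (3 * M)))) (\<Sum>k\<le>2 * n. X ^ epsi n k)"
    unfolding fp
  proof -
    have "\<forall>k\<le>2 * n. epsi n k < M \<longrightarrow> M \<le> k \<and> M \<le> 2 * n - k"
    proof (intro allI impI)
      fix k assume k: "k \<le> 2 * n" "epsi n k < M"
      have "\<bar>int k - int n\<bar> \<le> (int k - int n) * (int k - int n - 1) + 1" by (rule abs_le_tri)
      moreover have "int (epsi n k) * 2 = (int k - int n) * (int k - int n - 1)"
        using epsi_2[of n k] xx1_nonneg[of "int k - int n"] by (simp add: mult.commute)
      ultimately have "- (2 * int (epsi n k) + 1) \<le> int k - int n" "int k - int n \<le> 2 * int (epsi n k) + 1"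
        by (simp_all add: abs_le_iff)
      moreover have "int (epsi n k) < int M" using k by simp
      moreover have "int n = 3 * int M + 1" by (simp add: n_def)
      ultimately have "int M \<le> int k" "int M + int k \<le> 2 * int n" by linarith+
      then show "M \<le> k \<and> M \<le> 2 * n - k" by linarith
    qed
    then show "teq M (f 1 * (\<Sum>k\<le>2 * n. qbin X (2 * n) k * X ^ epsi n k)) (\<Sum>k\<le>2 * n. X ^ epsi n k)"
      using lim_sum[of 1 "2 * n" "epsi n" M] by simp
  qed
  have D: "teq M (\<Sum>k\<le>2 * n. X ^ epsi n k) psi_s"
    unfolding teq_def
  proof (intro allI impI)
    fix m assume "m < M"
    then have c: "card {k\<in>{..2 * n}. epsi n k = m} = card {i::int. i * (i - 1) = 2 * int m}"
      by (intro card_psi) (auto simp: n_def)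
    show "(\<Sum>k\<le>2 * n. X ^ epsi n k) $ m = psi_s $ m"
      by (simp only: count_nth finite_atMost c) (simp add: psi_s_def)
  qed
  have "teq M (f 1 * (R n * (2 * R (3 * M)))) (f 1 * ((f 2 * inverse (f 1)) * (2 * (f 2 * inverse (f 1)))))"
    by (intro teq_mult teq_refl R_teq) (auto simp: n_def)
  then have "teq M (f 1 * (R n * (2 * R (3 * M)))) (2 * (f 2 * inverse (f 1)) * (f 2 * inverse (f 1)) * f 1)"
    by (simp add: mult_ac)
  then show "teq M psi_s (2 * (f 2 * inverse (f 1)) * (f 2 * inverse (f 1)) * f 1)"
    using teq_trans[OF teq_sym[OF D] teq_sym[OF C]] teq_trans by blast
qed


definition "U4 = ((-14, 14, -4, 0, 0) :: vec)"
definition "V4 = ((-10, 2, 4, 0, 0) :: vec)"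
definition "A2 = ((-5, 0, 5, -2, 0) :: vec)"
definition "B2 = ((-5, 2, -1, 2, 0) :: vec)"

lemma DD_nth: "D (D A) $ n = (if 4 dvd n then A $ (n div 4) else 0)"
  by (auto simp: D_nth div_mult2_eq[symmetric] elim!: evenE)

lemma XDDD_nth: "(X * D (D (D B))) $ n = (if n mod 8 = 1 then B $ (n div 8) else 0)"
proof (cases n)
  case 0 then show ?thesis by simp
next
  case (Suc m)
  have "D (D (D B)) $ m = (if 8 dvd m then B $ (m div 8) else 0)"
    by (auto simp: D_nth div_mult2_eq[symmetric] elim!: evenE)
  moreover have "(Suc m mod 8 = 1) = (8 dvd m)" by presburger
  moreover have "8 dvd m \<Longrightarrow> Suc m div 8 = m div 8" by presburger
  ultimately show ?thesis using Suc by auto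
qed

lemma S4: "card {i::int. i ^ 2 = int (4 * m)} = card {j::int. j ^ 2 = int m}"
proof -
  have "{i::int. i ^ 2 = int (4 * m)} = (\<lambda>j. 2 * j) ` {j::int. j ^ 2 = int m}"
  proof (intro set_eqI iffI)
    fix i assume "i \<in> {i::int. i ^ 2 = int (4 * m)}"
    then have i: "i ^ 2 = 4 * int m" by simp
    then have "even (i ^ 2)" by simp
    then have "even i" by simp
    then obtain j where j: "i = 2 * j" by blast
    then have "j ^ 2 = int m" using i by (simp add: power_mult_distrib)
    then show "i \<in> (\<lambda>j. 2 * j) ` {j::int. j ^ 2 = int m}" using j by blast
  qed (auto simp: power_mult_distrib)
  moreover have "inj_on (\<lambda>j::int. 2 * j) {j::int. j ^ 2 = int m}" by (rule inj_onI) simp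
  ultimately show ?thesis by (simp add: card_image)
qed

lemma S8: "card {i::int. i ^ 2 = int (8 * m + 1)} = card {j::int. j * (j - 1) = 2 * int m}"
proof -
  have sq: "(2 * j - 1) ^ 2 = 4 * (j * (j - 1)) + (1::int)" for j
    by (simp add: power2_eq_square algebra_simps)
  have "{i::int. i ^ 2 = int (8 * m + 1)} = (\<lambda>j. 2 * j - 1) ` {j::int. j * (j - 1) = 2 * int m}"
  proof (intro set_eqI iffI)
    fix i assume "i \<in> {i::int. i ^ 2 = int (8 * m + 1)}"
    then have i: "i ^ 2 = 8 * int m + 1" by simp
    then have "odd (i ^ 2)" by simp
    then have "odd i" by simp
    then obtain j where j: "i = 2 * j - 1" by (metis oddE add_diff_cancel_right' mult_2 add.assoc add.commute)
    then have "j * (j - 1) = 2 * int m" using i sq[of j] by simp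
    then show "i \<in> (\<lambda>j. 2 * j - 1) ` {j::int. j * (j - 1) = 2 * int m}" using j by blast
  qed (auto simp: sq)
  moreover have "inj_on (\<lambda>j::int. 2 * j - 1) {j::int. j * (j - 1) = 2 * int m}" by (rule inj_onI) simp
  ultimately show ?thesis by (simp add: card_image)
qed

lemma S0: assumes "\<not> 4 dvd n" "n mod 8 \<noteq> 1" shows "{i::int. i ^ 2 = int n} = {}"
proof (rule ccontr)
  assume "{i::int. i ^ 2 = int n} \<noteq> {}"
  then obtain i where i: "i ^ 2 = int n" by auto
  show False
  proof (cases "even i")
    case True
    then obtain j where "i = 2 * j" by blast
    then have "int n = 4 * j ^ 2" using i by (simp add: power_mult_distrib)
    then have "4 dvd int n" by simp
    then show False using assms(1) by presburger
  next
    case False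
    then obtain j where j: "i = 2 * j + 1" using oddE by blast
    have "even (j * (j + 1))" by simp
    then obtain t where t: "j * (j + 1) = 2 * t" by blast
    have "i ^ 2 = 4 * (j * (j + 1)) + 1" using j by (simp add: power2_eq_square algebra_simps)
    then have "int n = 8 * t + 1" using i t by simp
    then have "int n mod 8 = 1" by simp
    then show False using assms(2) by presburger
  qed
qed

lemma phi_dissect: "phi_s = D (D phi_s) + X * D (D (D psi_s))"
proof (rule fps_ext)
  fix n
  show "phi_s $ n = (D (D phi_s) + X * D (D (D psi_s))) $ n"
  proof (cases "4 dvd n")
    case True
    then obtain m where m: "n = 4 * m" by blast
    have "n mod 8 \<noteq> 1" using m by presburger
    moreover have "card {i::int. i ^ 2 = int n} = card {j::int. j ^ 2 = int (n div 4)}"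
      using S4[of m] m by simp
    ultimately show ?thesis using True by (simp only: fps_add_nth DD_nth XDDD_nth) (simp add: phi_s_def)
  next
    case False
    show ?thesis
    proof (cases "n mod 8 = 1")
      case True
      then obtain m where m: "n = 8 * m + 1" by (metis div_mod_decomp mult.commute)
      moreover have nd: "n div 8 = m" using m by presburger
      ultimately have "card {i::int. i ^ 2 = int n} = card {j::int. j * (j - 1) = 2 * int (n div 8)}"
        using S8[of m] by simp
      then show ?thesis using False True by (simp only: fps_add_nth DD_nth XDDD_nth) (simp add: phi_s_def psi_s_def)
    next
      case c: False
      then show ?thesis using False S0[OF False c] by (simp only: fps_add_nth DD_nth XDDD_nth) (simp add: phi_s_def)
    qed
  qed
qed

lemma m1: "f 2 = mon (0, 1, 0, 0, 0)" "inverse (f 1) = mon (-1, 0, 0, 0, 0)" "inverse (f 4) = mon (0, 0, -1, 0, 0)"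
  by (simp_all add: mon.simps ip_def)
lemma m1': "f 1 = mon (1, 0, 0, 0, 0)"
  by (simp_all add: mon.simps ip_def)

lemma phi_mon: "phi_s = mon (-2, 5, -2, 0, 0)"
  unfolding phi_prod fps_inverse_mult m1 mon_power mon_mult by simp

lemma psi_mon: "psi_s = of_int 2 * mon (-1, 2, 0, 0, 0)"
  unfolding psi_prod m1(1) m1(2) unfolding m1' mon_power mon_mult by (simp add: mult.assoc mon_mult)

lemma D_numeral[simp]: "D (numeral k) = numeral k"
  using D_of_int[of "numeral k"] by simp

lemma phi_split: "mon (-2, 5, -2, 0, 0) = mon (0, 0, -2, 5, -2) + of_int 2 * X * mon (0, 0, 0, -1, 2)"
proof -
  have "mon (-2, 5, -2, 0, 0) = D (D (mon (-2, 5, -2, 0, 0))) + X * D (D (D (of_int 2 * mon (-1, 2, 0, 0, 0))))"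
    using phi_dissect unfolding phi_mon psi_mon .
  also have "\<dots> = mon (0, 0, -2, 5, -2) + of_int 2 * X * mon (0, 0, 0, -1, 2)"
    by (simp add: D_mon D_mult D_of_int mult.assoc)
  finally show ?thesis .
qed

lemma D2_id: "mon (-2, 0, 0, 0, 0) = D (mon A2) + of_int 2 * X * D (mon B2)"
proof -
  have "mon (-2, 0, 0, 0, 0) = mon (0, -5, 2, 0, 0) * mon (-2, 5, -2, 0, 0)" by (simp add: mon_mult)
  also have "\<dots> = mon (0, -5, 2, 0, 0) * mon (0, 0, -2, 5, -2) + of_int 2 * X * (mon (0, -5, 2, 0, 0) * mon (0, 0, 0, -1, 2))"
    unfolding phi_split by (simp add: algebra_simps)
  also have "\<dots> = D (mon A2) + of_int 2 * X * D (mon B2)"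
    by (simp add: mon_mult A2_def B2_def D_mon)
  finally show ?thesis .
qed

lemma neg_D_zero: assumes "A = - D A" shows "A = 0"
proof -
  have "A $ n = 0" for n
  proof (induction n rule: less_induct)
    case (less n)
    have "A $ n = - (D A $ n)" using assms by (metis fps_neg_nth)
    then show ?case
    proof (cases "n = 0")
      case True then show ?thesis using \<open>A $ n = - (D A $ n)\<close> by (simp add: D_nth)
    next
      case False
      then show ?thesis using \<open>A $ n = - (D A $ n)\<close> less by (simp add: D_nth)
    qed
  qed
  then show ?thesis by (simp add: fps_eq_iff)
qed

lemma K_id: "mon (-4, 10, -4, 0, 0) = mon (0, -4, 10, -4, 0) + of_int 4 * X * mon (0, 0, -2, 4, 0)"
proof -
  define a where "a = mon (0, 0, -2, 5, -2)"
  define b where "b = mon (0, 0, 0, -1, 2)"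
  have sq: "mon (-4, 10, -4, 0, 0) = a * a + of_int 4 * X * (a * b) + of_int 4 * X ^ 2 * (b * b)"
  proof -
    have "mon (-4, 10, -4, 0, 0) = mon (-2, 5, -2, 0, 0) * mon (-2, 5, -2, 0, 0)" by (simp add: mon_mult)
    also have "\<dots> = (a + of_int 2 * X * b) * (a + of_int 2 * X * b)" unfolding phi_split a_def b_def ..
    finally show ?thesis by (simp add: algebra_simps power2_eq_square)
  qed
  have ab: "a * b = mon (0, 0, -2, 4, 0)" "a * a = mon (0, 0, -4, 10, -4)" "b * b = mon (0, 0, 0, -2, 4)"
    by (simp_all add: a_def b_def mon_mult)
  define Dl where "Dl = mon (-4, 10, -4, 0, 0) - mon (0, -4, 10, -4, 0) - of_int 4 * X * mon (0, 0, -2, 4, 0)"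
  have DDl: "D Dl = mon (0, -4, 10, -4, 0) - mon (0, 0, -4, 10, -4) - of_int 4 * X ^ 2 * mon (0, 0, 0, -2, 4)"
    unfolding Dl_def by (simp add: D_diff D_mult D_mon D_X D_of_int)
  have "Dl = - D Dl" unfolding DDl unfolding Dl_def sq ab by (simp add: algebra_simps)
  then have "Dl = 0" by (rule neg_D_zero)
  then show ?thesis unfolding Dl_def by (simp add: algebra_simps)
qed

lemma D4_id: "mon (-4, 0, 0, 0, 0) = D (mon U4) + of_int 4 * X * D (mon V4)"
proof -
  have "mon (-4, 0, 0, 0, 0) = mon (0, -10, 4, 0, 0) * mon (-4, 10, -4, 0, 0)" by (simp add: mon_mult)
  also have "\<dots> = mon (0, -10, 4, 0, 0) * mon (0, -4, 10, -4, 0) + of_int 4 * X * (mon (0, -10, 4, 0, 0) * mon (0, 0, -2, 4, 0))"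
    unfolding K_id by (simp add: algebra_simps)
  also have "\<dots> = D (mon U4) + of_int 4 * X * D (mon V4)"
    by (simp add: mon_mult U4_def V4_def D_mon)
  finally show ?thesis .
qed




lemma icong_sum: "(\<And>k. k \<in> S \<Longrightarrow> icong m (F k) 0) \<Longrightarrow> icong m (sum F S) 0"
  by (induction S rule: infinite_finite_induct) (auto, metis add.right_neutral icong_add)

lemma icong_diff0: "icong m (A - B) 0 \<Longrightarrow> icong m A B"
  by (simp add: icong_def)

lemma vadd_commute: "vadd v w = vadd w v"
  by (cases v; cases w) (simp add: add.commute)

lemma DmonDmon: "D (mon v) * D (mon w) = D (mon (vadd v w))"
  by (simp add: D_mult[symmetric] mon_mult)

lemma intfps_Dmon: "intfps (D (mon v))" by (simp add: intfps_D intfps_mon)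

definition tw :: "nat \<Rightarrow> nat \<Rightarrow> vec" where
  "tw m j = vadd (vsc (int m - int j) U4) (vsc (int j) V4)"

definition tm :: "nat \<Rightarrow> nat \<Rightarrow> rat fps" where
  "tm m j = of_int (int (m choose j) * 4 ^ j) * fps_X ^ j * D (mon (tw m j))"

lemma binom_term: "of_nat (m choose k) * (of_int 4 * fps_X * D (mon V4)) ^ k * D (mon U4) ^ (m - k) = tm m k"
proof (cases "k \<le> m")
  case True
  have "D (mon V4) ^ k * D (mon U4) ^ (m - k) = D (mon (tw m k))"
    using True by (simp add: D_power[symmetric] mon_power DmonDmon tw_def of_nat_diff vadd_commute)
  then show ?thesis unfolding tm_def
    by (simp add: power_mult_distrib mult_ac)
next
  case False then show ?thesis by (simp add: tm_def)
qed

lemma g4_trunc: "icong 128 (mon (-4, 0, 0, 0, 0) ^ m) (\<Sum>j<4. tm m j)"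
proof -
  have "mon (-4, 0, 0, 0, 0) ^ m = (of_int 4 * fps_X * D (mon V4) + D (mon U4)) ^ m"
    unfolding D4_id by (simp only: add.commute)
  also have "\<dots> = (\<Sum>k\<le>m. of_nat (m choose k) * (of_int 4 * fps_X * D (mon V4)) ^ k * D (mon U4) ^ (m - k))"
    by (rule binomial_ring)
  also have "\<dots> = (\<Sum>k\<le>m. tm m k)"
    by (rule sum.cong[OF refl binom_term])
  finally have "mon (-4, 0, 0, 0, 0) ^ m = (\<Sum>k\<le>m. tm m k)" .
  also have "\<dots> = (\<Sum>k\<in>{..m} \<inter> {..<4}. tm m k) + (\<Sum>k\<in>{..m} - {..<4}. tm m k)"
    by (metis (no_types) Diff_Int_distrib2 Int_Diff_Un Int_Diff_disjoint finite_Int finite_atMost sum.union_disjoint finite_Diff inf_commute)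
  also have "(\<Sum>k\<in>{..m} \<inter> {..<4}. tm m k) = (\<Sum>j<4. tm m j)"
    by (rule sum.mono_neutral_left) (auto simp: tm_def)
  finally have eq: "mon (-4, 0, 0, 0, 0) ^ m = (\<Sum>j<4. tm m j) + (\<Sum>k\<in>{..m} - {..<4}. tm m k)" .
  have "icong 128 (\<Sum>k\<in>{..m} - {..<4}. tm m k) 0"
  proof (rule icong_sum)
    fix k assume "k \<in> {..m} - {..<4}"
    then have k4: "k \<ge> 4" by auto
    have "(128::int) dvd 4 ^ k"
    proof -
      have kk: "k = 4 + (k - 4)" using k4 by simp
      have "(4::int) ^ k = 4 ^ 4 * 4 ^ (k - 4)" by (subst kk, subst power_add) simp
      then show ?thesis by simp
    qed
    then have "128 dvd int (m choose k) * 4 ^ k" by simp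
    then show "icong 128 (tm m k) 0" unfolding tm_def mult.assoc
      by (intro icong_zero intfps_mult intfps_Dmon) auto
  qed
  then show ?thesis using eq
    by (metis add.commute add.right_neutral icong_add icong_refl)
qed

type_synonym tlist = "(int \<times> nat \<times> vec) list"

definition ev :: "tlist \<Rightarrow> rat fps" where
  "ev LL = sum_list (map (\<lambda>(c, t, w). of_int c * fps_X ^ t * mon w) LL)"
definition evD :: "tlist \<Rightarrow> rat fps" where
  "evD LL = sum_list (map (\<lambda>(c, t, w). of_int c * fps_X ^ t * D (mon w)) LL)"

lemma ev_simps[simp]: "ev [] = 0" "ev (x # LL) = (case x of (c, t, w) \<Rightarrow> of_int c * fps_X ^ t * mon w) + ev LL"
  "ev (L1 @ L2) = ev L1 + ev L2"
  by (simp_all add: ev_def)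
lemma evD_simps[simp]: "evD [] = 0" "evD (x # LL) = (case x of (c, t, w) \<Rightarrow> of_int c * fps_X ^ t * D (mon w)) + evD LL"
  "evD (L1 @ L2) = evD L1 + evD L2"
  by (simp_all add: evD_def)
lemma evD_concat: "evD (concat Ls) = sum_list (map evD Ls)"
  by (induction Ls) auto

fun bterm :: "int \<Rightarrow> nat \<Rightarrow> nat \<Rightarrow> vec \<Rightarrow> bool \<Rightarrow> nat \<Rightarrow> tlist" where
  "bterm c s m base eps j = (let c' = c * int (m choose j) * 4 ^ j; w = vadd (tw m j) base in
     if eps then [(c', s + j, vadd w A2), (2 * c', s + j + 1, vadd w B2)] else [(c', s + j, w)])"

fun expand1 :: "int \<times> nat \<times> vec \<Rightarrow> tlist" where
  "expand1 (c, s, (a, b, c4, d, e)) = (let n = nat (- a); m = n div 4; eps = (n mod 4 = 2) in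
     concat (map (bterm c s m (b, c4, d, 0, 0) eps) [0, 1, 2, 3]))"

lemma bterm_eq: "evD (bterm c s m base eps j) =
   of_int c * fps_X ^ s * tm m j * (if eps then mon (-2, 0, 0, 0, 0) else 1) * D (mon base)"
proof (cases eps)
  case True
  then show ?thesis unfolding D2_id
    by (simp add: Let_def tm_def DmonDmon[symmetric] power_add algebra_simps)
next
  case False
  then show ?thesis
    by (simp add: Let_def tm_def DmonDmon[symmetric] power_add algebra_simps)
qed

lemma sum4: "(\<Sum>j<(4::nat). g j) = g 0 + g 1 + g 2 + (g 3 :: rat fps)"
  by (simp add: eval_nat_numeral)

lemma expand1_ok: assumes "a \<le> 0" "even a"
  shows "icong 128 (of_int c * fps_X ^ s * mon (a, b, c4, d, 0)) (evD (expand1 (c, s, (a, b, c4, d, 0))))"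
proof -
  define n where "n = nat (- a)"
  define m where "m = n div 4"
  define eps where "eps = (n mod 4 = 2)"
  have ev: "even n" using assms unfolding n_def by (simp add: even_nat_iff)
  have a: "a = - (4 * int m + (if eps then 2 else 0))"
  proof -
    have "n mod 4 = 0 \<or> n mod 4 = 2" using ev by presburger
    moreover have "n = 4 * m + n mod 4" unfolding m_def by simp
    ultimately show ?thesis unfolding eps_def n_def using assms(1) by auto
  qed
  have mon_split: "mon (a, b, c4, d, 0) = mon (-4, 0, 0, 0, 0) ^ m * (if eps then mon (-2, 0, 0, 0, 0) else 1) * D (mon (b, c4, d, 0, 0))"
    by (cases eps; simp only: if_True if_False mult_1_right D_mon mon_power mon_mult; simp add: a mult.commute)
  define R where "R = of_int c * fps_X ^ s * (if eps then mon (-2, 0, 0, 0, 0) else 1) * D (mon (b, c4, d, 0, 0))"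
  have intR: "intfps R" unfolding R_def by (auto intro!: intfps_mult intfps_Dmon intfps_mon)
  have lhs: "of_int c * fps_X ^ s * mon (a, b, c4, d, 0) = R * mon (-4, 0, 0, 0, 0) ^ m"
    unfolding mon_split R_def by (simp add: mult_ac)
  have rhs: "evD (expand1 (c, s, (a, b, c4, d, 0))) = R * (\<Sum>j<4. tm m j)"
    unfolding R_def expand1.simps Let_def n_def[symmetric] m_def[symmetric] eps_def[symmetric] evD_concat
    by (simp add: bterm_eq sum4 algebra_simps del: bterm.simps)
  show ?thesis unfolding lhs rhs by (intro icong_mult g4_trunc intR)
qed

fun okt :: "int \<times> nat \<times> vec \<Rightarrow> bool" where
  "okt (c, s, (a, b, c4, d, e)) = (a \<le> 0 \<and> even a \<and> e = 0)"

definition expand :: "tlist \<Rightarrow> tlist" where "expand LL = concat (map expand1 LL)"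

lemma expand_ok: "list_all okt LL \<Longrightarrow> icong 128 (ev LL) (evD (expand LL))"
proof (induction LL)
  case Nil then show ?case by (simp add: expand_def)
next
  case (Cons x LL)
  obtain c s a b c4 d e where x: "x = (c, s, (a, b, c4, d, e))" by (cases x) auto
  have 1: "icong 128 (of_int c * fps_X ^ s * mon (a, b, c4, d, 0)) (evD (expand1 (c, s, (a, b, c4, d, 0))))"
    using Cons.prems x by (intro expand1_ok) auto
  have "e = 0" using Cons.prems x by auto
  then show ?case using icong_add[OF 1 Cons.IH] Cons.prems x by (simp add: expand_def)
qed

definition evens :: "tlist \<Rightarrow> tlist" where
  "evens LL = map (\<lambda>(c, t, w). (c, t div 2, w)) (filter (\<lambda>(c, t, w). even t) LL)"

lemma E_even_t: "even t \<Longrightarrow> E (fps_X ^ t * D N) = fps_X ^ (t div 2) * N"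
  using E_even_term[of "t div 2" N] by simp
lemma E_odd_t: "odd t \<Longrightarrow> E (fps_X ^ t * D N) = 0"
  using E_odd_term[of "t div 2" N] by (simp add: odd_two_times_div_two_succ)

lemma E_evD: "E (evD LL) = ev (evens LL)"
proof (induction LL)
  case Nil then show ?case by (simp add: evens_def E_def fps_eq_iff)
next
  case (Cons x LL)
  obtain c t w where x: "x = (c, t, w)" by (cases x) auto
  show ?case
  proof (cases "even t")
    case True
    show ?thesis using Cons.IH True unfolding x
      by (simp add: evens_def E_add mult.assoc E_of_int_mult E_even_t)
  next
    case False
    show ?thesis using Cons.IH False unfolding x
      by (simp add: evens_def E_add mult.assoc E_of_int_mult E_odd_t)
  qed
qed

definition coef :: "tlist \<Rightarrow> nat \<times> vec \<Rightarrow> int" where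
  "coef LL k = sum_list (map (\<lambda>(c, kk). if kk = k then c else 0) LL)"

fun hh :: "nat \<times> vec \<Rightarrow> rat fps" where "hh (t, w) = fps_X ^ t * mon w"

lemma ev_group: "finite K \<Longrightarrow> set (map snd LL) \<subseteq> K \<Longrightarrow> ev LL = (\<Sum>k\<in>K. of_int (coef LL k) * hh k)"
proof (induction LL)
  case Nil then show ?case by (simp add: coef_def)
next
  case (Cons x LL)
  obtain c t w where x: "x = (c, t, w)" by (cases x) auto
  have "(\<Sum>k\<in>K. of_int (coef (x # LL) k) * hh k) =
        (\<Sum>k\<in>K. (if (t, w) = k then of_int c * hh k else 0)) + (\<Sum>k\<in>K. of_int (coef LL k) * hh k)"
    by (simp add: coef_def x sum.distrib[symmetric] distrib_right) (intro sum.cong, auto)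
  also have "(\<Sum>k\<in>K. (if (t, w) = k then of_int c * hh k else 0)) = of_int c * hh (t, w)"
    using Cons.prems x by (simp add: sum.delta)
  finally show ?case using Cons x by (simp add: mult.assoc)
qed

lemma crit: assumes "\<forall>k\<in>set (map snd (L1 @ L2)). coef L1 k mod 128 = coef L2 k mod 128"
  shows "icong 128 (ev L1) (ev L2)"
proof (rule icong_diff0)
  let ?K = "set (map snd (L1 @ L2))"
  have "ev L1 - ev L2 = (\<Sum>k\<in>?K. of_int (coef L1 k - coef L2 k) * hh k)"
    by (simp add: ev_group[of ?K L1] ev_group[of ?K L2] sum_subtractf[symmetric] left_diff_distrib del: set_map hh.simps)
  also have "icong 128 \<dots> 0"
  proof (rule icong_sum)
    fix k assume "k \<in> ?K"
    then have "128 dvd (coef L1 k - coef L2 k)" using assms by (simp add: mod_eq_dvd_iff)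
    moreover have "intfps (hh k)" by (cases k) (simp add: intfps_mult intfps_mon)
    ultimately show "icong 128 (of_int (coef L1 k - coef L2 k) * hh k) 0" by (rule icong_zero[rotated])
  qed
  finally show "icong 128 (ev L1 - ev L2) 0" .
qed

lemma stage: assumes "list_all okt LL"
  "\<forall>k\<in>set (map snd (evens (expand LL) @ T)). coef (evens (expand LL)) k mod 128 = coef T k mod 128"
  shows "icong 128 (E (ev LL)) (ev T)"
proof -
  have "icong 128 (E (ev LL)) (ev (evens (expand LL)))"
    using icong_E[OF expand_ok[OF assms(1)]] by (simp add: E_evD)
  then show ?thesis using crit[OF assms(2)] by (rule icong_trans)
qed

lemma choose3_6: "6 * (n choose 3) = n * (n - 1) * (n - 2)"
proof (induction n)
  case 0 then show ?case by simp
next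
  case (Suc n)
  have ev2: "even (n * (n - 1))" by (cases n) auto
  have c2: "2 * (n choose 2) = n * (n - 1)"
    using ev2 by (simp add: choose_two dvd_mult_div_cancel)
  have "6 * (Suc n choose 3) = 6 * (n choose 2) + 6 * (n choose 3)" by (simp add: numeral_3_eq_3 numeral_2_eq_2)
  also have "\<dots> = 3 * (n * (n - 1)) + n * (n - 1) * (n - 2)" using c2 Suc by simp
  also have "\<dots> = Suc n * (Suc n - 1) * (Suc n - 2)"
  proof (cases "n \<ge> 2")
    case True then obtain k where "n = k + 2" by (metis add.commute le_Suc_ex)
    then show ?thesis by (simp add: algebra_simps)
  next
    case False then have "n = 0 \<or> n = 1" by auto
    then show ?thesis by auto
  qed
  finally show ?case .
qed

lemma choose3: "n choose 3 = n * (n - 1) * (n - 2) div 6"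
  using choose3_6[of n] by simp


definition L0 :: tlist where "L0 = [(1, 0, (-6, -3, 3, 0, 0))]"
definition T2 :: tlist where "T2 = [(1, 0, (-22, 17, 1, -2, 0)), (8, 1, (-18, 7, 3, 2, 0))]"
definition T4 :: tlist where "T4 = [(32, 1, (-50, 47, -1, -2, 0)), (56, 1, (-54, 61, -15, 2, 0)), (1, 0, (-58, 71, -17, -2, 0))]"
definition T8 :: tlist where "T8 = [(32, 1, (-126, 169, -51, 2, 0)), (16, 1, (-122, 155, -37, -2, 0)), (1, 0, (-130, 179, -53, -2, 0))]"
definition T16 :: tlist where "T16 = [(96, 1, (-270, 385, -123, 2, 0)), (1, 0, (-274, 395, -125, -2, 0))]"
definition T32 :: tlist where "T32 = [(96, 1, (-554, 803, -253, -2, 0)), (96, 1, (-558, 817, -267, 2, 0)), (1, 0, (-562, 827, -269, -2, 0))]"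

lemmas evsimps = expand_def evens_def coef_def tw_def U4_def V4_def A2_def B2_def choose3 choose_two choose_one

lemma st1: "icong 128 (E (ev L0)) (ev T2)"
  by (rule stage) (simp_all add: L0_def T2_def evsimps)
lemma st5: "icong 128 (E (ev T16)) (ev T32)"
  by (rule stage) (simp_all add: T16_def T32_def evsimps)
lemma st2: "icong 128 (E (ev T2)) (ev T4)"
  by (rule stage) (simp_all add: T4_def T2_def evsimps)
lemma st3: "icong 128 (E (ev T4)) (ev T8)"
  by (rule stage) (simp_all add: T4_def T8_def evsimps)
lemma st4: "icong 128 (E (ev T8)) (ev T16)"
  by (rule stage) (simp_all add: T16_def T8_def evsimps)

lemma fk: "f 1 = mon (1, 0, 0, 0, 0)" "f 2 = mon (0, 1, 0, 0, 0)" "f 4 = mon (0, 0, 1, 0, 0)" "f 8 = mon (0, 0, 0, 1, 0)"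
  by (simp_all add: mon.simps ip_def)

lemma mon_inverse: "inverse (mon v) = mon (vsc (-1) v)"
  by (rule fps_inverse_unique) (cases v, simp add: mon_mult)

lemma mon_div: "A / mon v = A * mon (vsc (-1) v)"
  by (simp add: fps_divide_unit mon_nth0 mon_inverse)

lemma bt_ev: "bt_gf = ev L0"
  unfolding bt_gf_def L0_def fk mon_power mon_mult mon_div by simp

lemma EE: "Abs_fps (\<lambda>n. bt (2 * k * n)) = E (Abs_fps (\<lambda>n. bt (k * n)))"
  by (simp add: E_def mult.assoc mult.left_commute)

lemma bt1: "Abs_fps (\<lambda>n. bt (1 * n)) = bt_gf" by (simp add: bt_def fps_eq_iff)

lemma c4: "icong 128 (Abs_fps (\<lambda>n. bt (4 * n))) (ev T4)"
proof -
  have "icong 128 (Abs_fps (\<lambda>n. bt (2 * n))) (ev T2)"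
    using st1 EE[of 1] bt1 bt_ev by simp
  then have "icong 128 (E (Abs_fps (\<lambda>n. bt (2 * n)))) (ev T4)"
    using icong_trans[OF icong_E st2] by blast
  then show ?thesis using EE[of 2] by simp
qed

lemma c8: "icong 128 (Abs_fps (\<lambda>n. bt (8 * n))) (ev T8)"
  using icong_trans[OF icong_E[OF c4] st3] EE[of 4] by simp
lemma c16: "icong 128 (Abs_fps (\<lambda>n. bt (16 * n))) (ev T16)"
  using icong_trans[OF icong_E[OF c8] st4] EE[of 8] by simp
lemma c32: "icong 128 (Abs_fps (\<lambda>n. bt (32 * n))) (ev T32)"
  using icong_trans[OF icong_E[OF c16] st5] EE[of 16] by simp

lemma r4: "ev T4 = 32 * fps_X * (f 2 ^ 47 / (f 1 ^ 50 * f 4 * f 8 ^ 2))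
            + 56 * fps_X * (f 2 ^ 61 * f 8 ^ 2 / (f 1 ^ 54 * f 4 ^ 15))
            + f 2 ^ 71 / (f 1 ^ 58 * f 4 ^ 17 * f 8 ^ 2)"
  unfolding T4_def fk mon_power mon_mult mon_div by simp
lemma r8: "ev T8 = 32 * fps_X * (f 2 ^ 169 * f 8 ^ 2 / (f 1 ^ 126 * f 4 ^ 51))
            + 16 * fps_X * (f 2 ^ 155 / (f 1 ^ 122 * f 4 ^ 37 * f 8 ^ 2))
            + f 2 ^ 179 / (f 1 ^ 130 * f 4 ^ 53 * f 8 ^ 2)"
  unfolding T8_def fk mon_power mon_mult mon_div by simp
lemma r16: "ev T16 = 96 * fps_X * (f 2 ^ 385 * f 8 ^ 2 / (f 1 ^ 270 * f 4 ^ 123))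
            + f 2 ^ 395 / (f 1 ^ 274 * f 4 ^ 125 * f 8 ^ 2)"
  unfolding T16_def fk mon_power mon_mult mon_div by simp
lemma r32: "ev T32 = 96 * fps_X * (f 2 ^ 803 / (f 1 ^ 554 * f 4 ^ 253 * f 8 ^ 2))
            + 96 * fps_X * (f 2 ^ 817 * f 8 ^ 2 / (f 1 ^ 558 * f 4 ^ 267))
            + f 2 ^ 827 / (f 1 ^ 562 * f 4 ^ 269 * f 8 ^ 2)"
  unfolding T32_def fk mon_power mon_mult mon_div by simp

theorem mainTheorem3:
  shows "fps_cong (Abs_fps (\<lambda>n. bt (4 * n)))
           (32 * fps_X * (f 2 ^ 47 / (f 1 ^ 50 * f 4 * f 8 ^ 2))
            + 56 * fps_X * (f 2 ^ 61 * f 8 ^ 2 / (f 1 ^ 54 * f 4 ^ 15))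
            + f 2 ^ 71 / (f 1 ^ 58 * f 4 ^ 17 * f 8 ^ 2)) 128
       \<and> fps_cong (Abs_fps (\<lambda>n. bt (8 * n)))
           (32 * fps_X * (f 2 ^ 169 * f 8 ^ 2 / (f 1 ^ 126 * f 4 ^ 51))
            + 16 * fps_X * (f 2 ^ 155 / (f 1 ^ 122 * f 4 ^ 37 * f 8 ^ 2))
            + f 2 ^ 179 / (f 1 ^ 130 * f 4 ^ 53 * f 8 ^ 2)) 128
       \<and> fps_cong (Abs_fps (\<lambda>n. bt (16 * n)))
           (96 * fps_X * (f 2 ^ 385 * f 8 ^ 2 / (f 1 ^ 270 * f 4 ^ 123))
            + f 2 ^ 395 / (f 1 ^ 274 * f 4 ^ 125 * f 8 ^ 2)) 128
       \<and> fps_cong (Abs_fps (\<lambda>n. bt (32 * n)))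
           (96 * fps_X * (f 2 ^ 803 / (f 1 ^ 554 * f 4 ^ 253 * f 8 ^ 2))
            + 96 * fps_X * (f 2 ^ 817 * f 8 ^ 2 / (f 1 ^ 558 * f 4 ^ 267))
            + f 2 ^ 827 / (f 1 ^ 562 * f 4 ^ 269 * f 8 ^ 2)) 128"
  using c4 c8 c16 c32 unfolding r4 r8 r16 r32 by (auto intro: icong_fps_cong)

end
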